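(* For $A\in\mathrm{Sym}(3,\mathbb{C})$ let $c_3(A)$ be the cubic form $\underline{x}\mapsto\det(\underline{x}\,|\,A\underline{x}\,|\,A^2\underline{x})$ on $\mathbb{C}^3$. Then the map $c_3:\mathrm{Sym}(3,\mathbb{C})\to\mathrm{S}^3(\mathbb{C}^3)^\star$ is not identically zero, and for every $A\in\mathrm{Sym}(3,\mathbb{C})$ the cubic form $c_3(A)$ lies in the kernel of the Laplace operator $\Delta=\sum_{i=1}^3\frac{\partial^2}{\partial x_i^2}$.
   Context: $\mathrm{Sym}(3,\mathbb{C})$ is the space of complex symmetric $3\times3$ matrices; $\mathrm{S}^3(\mathbb{C}^3)^\star$ is the space of homogeneous cubic polynomials in $x_1,x_2,x_3$; $(\underline{x}\,|\,A\underline{x}\,|\,A^2\underline{x})$ is the matrix with these columns. *)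

theory Defs
  imports "HOL-Analysis.Analysis"
begin

definition sym3 :: "complex^3^3 \<Rightarrow> bool" where
  "sym3 A \<longleftrightarrow> transpose A = A"

definition cols3 :: "complex^3 \<Rightarrow> complex^3 \<Rightarrow> complex^3 \<Rightarrow> complex^3^3" where
  "cols3 u v w = (\<chi> i j. if j = 1 then u $ i else if j = 2 then v $ i else w $ i)"

definition c3 :: "complex^3^3 \<Rightarrow> complex^3 \<Rightarrow> complex" where
  "c3 A x = det (cols3 x (A *v x) ((A ** A) *v x))"

definition laplacian :: "(complex^3 \<Rightarrow> complex) \<Rightarrow> complex^3 \<Rightarrow> complex" where
  "laplacian f x = (\<Sum>i\<in>UNIV. deriv (deriv (\<lambda>t. f (x + axis i t))) 0)"

end

theory Submission imports Defs begin

definition cubic :: "(complex \<Rightarrow> complex) \<Rightarrow> bool" where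
  "cubic g \<longleftrightarrow> (\<exists>a b c d. \<forall>t. g t = a + b*t + c*t^2 + d*t^3)"

lemma cubic_d2:
  assumes "\<forall>t. g t = a + b*t + c*t^2 + d*t^3"
  shows "deriv (deriv g) 0 = g 1 + g (-1) - 2 * g 0"
proof -
  have g: "g = (\<lambda>t. a + b*t + c*t^2 + d*t^3)" using assms by auto
  have d1: "deriv g = (\<lambda>t. b + 2*c*t + 3*d*t^2)"
  proof
    fix t
    have "(g has_field_derivative (b + 2*c*t + 3*d*t^2)) (at t)"
      unfolding g by (auto intro!: derivative_eq_intros simp: algebra_simps power2_eq_square)
    then show "deriv g t = b + 2*c*t + 3*d*t^2" by (rule DERIV_imp_deriv)
  qed
  have "((\<lambda>t. b + 2*c*t + 3*d*t^2) has_field_derivative 2*c) (at 0)"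
    by (auto intro!: derivative_eq_intros)
  then have "deriv (deriv g) 0 = 2*c" unfolding d1 by (rule DERIV_imp_deriv)
  then show ?thesis using assms by (simp add: algebra_simps)
qed

lemma cubic_lin: "cubic (\<lambda>t. a + t*b)"
  unfolding cubic_def by (rule exI[of _ a], rule exI[of _ b], rule exI[of _ 0], rule exI[of _ 0]) (simp add: algebra_simps)

lemma cubic_mul3: "cubic (\<lambda>t. (a1 + t*b1) * (a2 + t*b2) * (a3 + t*b3))"
  unfolding cubic_def
  apply (rule exI[of _ "a1*a2*a3"], rule exI[of _ "b1*a2*a3+a1*b2*a3+a1*a2*b3"],
         rule exI[of _ "b1*b2*a3+b1*a2*b3+a1*b2*b3"], rule exI[of _ "b1*b2*b3"])
  by (simp add: algebra_simps power2_eq_square power3_eq_cube)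

lemma cubic_add: assumes "cubic f" "cubic g" shows "cubic (\<lambda>t. f t + g t)"
proof -
  obtain a b c d where f: "\<forall>t. f t = a + b*t + c*t^2 + d*t^3" using assms(1) unfolding cubic_def by blast
  obtain a' b' c' d' where g: "\<forall>t. g t = a' + b'*t + c'*t^2 + d'*t^3" using assms(2) unfolding cubic_def by blast
  show ?thesis unfolding cubic_def
    by (rule exI[of _ "a+a'"], rule exI[of _ "b+b'"], rule exI[of _ "c+c'"], rule exI[of _ "d+d'"]) (simp add: f g algebra_simps)
qed

lemma cubic_diff: assumes "cubic f" "cubic g" shows "cubic (\<lambda>t. f t - g t)"
proof -
  obtain a b c d where f: "\<forall>t. f t = a + b*t + c*t^2 + d*t^3" using assms(1) unfolding cubic_def by blast
  obtain a' b' c' d' where g: "\<forall>t. g t = a' + b'*t + c'*t^2 + d'*t^3" using assms(2) unfolding cubic_def by blast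
  show ?thesis unfolding cubic_def
    by (rule exI[of _ "a-a'"], rule exI[of _ "b-b'"], rule exI[of _ "c-c'"], rule exI[of _ "d-d'"]) (simp add: f g algebra_simps)
qed

lemma lin_entry: "\<exists>a b. \<forall>t::complex. ((M::complex^3^3) *v (x + axis i t)) $ k = a + t * b"
  by (rule exI[of _ "(M *v x) $ k"], rule exI[of _ "M $ k $ i"])
     (use exhaust_3[of i] in \<open>auto simp add: matrix_vector_mult_def sum_3 axis_def algebra_simps\<close>)

lemma lin_entry0: "\<exists>a b. \<forall>t::complex. (x + axis i t) $ k = a + t * b"
  by (rule exI[of _ "x $ k"], rule exI[of _ "axis i 1 $ k"]) (simp add: axis_def)

lemma cubic_c3: "cubic (\<lambda>t. c3 A (x + axis i t))"
proof -
  let ?u = "\<lambda>t. x + axis i t"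
  obtain p1 q1 where 1: "\<forall>t. ?u t $ 1 = p1 + t*q1" using lin_entry0 by blast
  obtain p2 q2 where 2: "\<forall>t. ?u t $ 2 = p2 + t*q2" using lin_entry0 by blast
  obtain p3 q3 where 3: "\<forall>t. ?u t $ 3 = p3 + t*q3" using lin_entry0 by blast
  obtain r1 e1 where 4: "\<forall>t. (A *v ?u t) $ 1 = r1 + t*e1" using lin_entry by blast
  obtain r2 e2 where 5: "\<forall>t. (A *v ?u t) $ 2 = r2 + t*e2" using lin_entry by blast
  obtain r3 e3 where 6: "\<forall>t. (A *v ?u t) $ 3 = r3 + t*e3" using lin_entry by blast
  obtain v1 w1 where 7: "\<forall>t. ((A**A) *v ?u t) $ 1 = v1 + t*w1" using lin_entry by blast
  obtain v2 w2 where 8: "\<forall>t. ((A**A) *v ?u t) $ 2 = v2 + t*w2" using lin_entry by blast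
  obtain v3 w3 where 9: "\<forall>t. ((A**A) *v ?u t) $ 3 = v3 + t*w3" using lin_entry by blast
  have e: "(\<lambda>t. c3 A (x + axis i t)) = (\<lambda>t.
      (p1 + t*q1) * (r2 + t*e2) * (v3 + t*w3) +
      (r1 + t*e1) * (v2 + t*w2) * (p3 + t*q3) +
      (v1 + t*w1) * (p2 + t*q2) * (r3 + t*e3) -
      (p1 + t*q1) * (v2 + t*w2) * (r3 + t*e3) -
      (r1 + t*e1) * (p2 + t*q2) * (v3 + t*w3) -
      (v1 + t*w1) * (r2 + t*e2) * (p3 + t*q3))"
    unfolding c3_def det_3 cols3_def using 1 2 3 4 5 6 7 8 9 by simp
  show ?thesis unfolding e
    by (intro cubic_add cubic_diff cubic_mul3)
qed

lemma key:
  assumes "sym3 A"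
  shows "(\<Sum>i\<in>UNIV. c3 A (x + axis i 1) + c3 A (x + axis i (-1)) - 2 * c3 A x) = 0"
proof -
  have t: "transpose A $ i $ j = A $ i $ j" for i j using assms unfolding sym3_def by simp
  have s: "A$2$1 = A$1$2" "A$3$1 = A$1$3" "A$3$2 = A$2$3"
    using t[of 2 1] t[of 3 1] t[of 3 2] by (simp_all add: transpose_def)
  show ?thesis
    unfolding c3_def det_3 cols3_def sum_3 
    by (simp add: matrix_matrix_mult_def matrix_vector_mult_def sum_3 axis_def s; algebra)
qed

theorem proposition6p1:
  shows "(\<exists>A. sym3 A \<and> c3 A \<noteq> (\<lambda>x. 0)) \<and>
         (\<forall>A. sym3 A \<longrightarrow> (\<forall>x. laplacian (c3 A) x = 0))"
proof
  define A :: "complex^3^3" where "A = (\<chi> i j. if i = j then (if i = 1 then 1 else if i = 2 then 2 else 3) else 0)"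
  have "sym3 A" unfolding sym3_def A_def by (simp add: transpose_def vec_eq_iff)
  moreover have "c3 A (\<chi> i. 1) \<noteq> 0"
    unfolding c3_def det_3 cols3_def A_def
    by (simp add: matrix_matrix_mult_def matrix_vector_mult_def sum_3)
  ultimately show "\<exists>A. sym3 A \<and> c3 A \<noteq> (\<lambda>x. 0)" by metis
next
  show "\<forall>A. sym3 A \<longrightarrow> (\<forall>x. laplacian (c3 A) x = 0)"
  proof (intro allI impI)
    fix A x assume sA: "sym3 A"
    have d: "deriv (deriv (\<lambda>t. c3 A (x + axis i t))) 0
          = c3 A (x + axis i 1) + c3 A (x + axis i (-1)) - 2 * c3 A x" for i
    proof -
      obtain a b c d where h: "\<forall>t. c3 A (x + axis i t) = a + b*t + c*t^2 + d*t^3"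
        using cubic_c3[of A x i] unfolding cubic_def by blast
      have z: "axis i (0::complex) = 0" by (simp add: axis_def vec_eq_iff)
      show ?thesis using cubic_d2[OF h] z by simp
    qed
    show "laplacian (c3 A) x = 0"
      unfolding laplacian_def d using key[OF sA, of x] by simp
  qed
qed

end
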